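(* Let $G$ be a finitely generated group and $S$ a finite generating set of $G$ closed under inverses, and let $\Delta(n)=\Delta_S(n)$ be as defined in the context. Then $\Delta(n)\le \lceil n/3\rceil$ for all $n\ge 1$. Moreover, if there is $N$ such that $\Delta(n)<\lceil n/3\rceil$ for all $n\ge N$, then $G$ is finitely presented and satisfies an exponential isoperimetric inequality: there is a finite presentation $\langle S\mid \mathcal R\rangle$ of $G$ and a constant $c$ such that every word $w$ in $S$ of length $n$ representing the identity of $G$ is freely equivalent to a product of at most $c^n$ conjugates of elements of $\mathcal R$ and their inverses.
   Context: Let $G$ be a finitely generated group, $S$ a finite generating set closed under inverses, and $\Gamma$ the Cayley diagram (there is an edge labelled $s$ from $g$ to $gs$ for $g\in G$, $s\in S$). The word metric $d(g,g')$ is the length of a shortest word in $S$ representing $g^{-1}g'$. A path of length $n\ge1$ in $\Gamma$ is a sequence $g_0,\dots,g_n$ of group elements with an edge of $\Gamma$ from each $g_{i-1}$ to $g_i$; it is a cycle if $g_n=g_0$. A (diagonal) triangulation of a circle in the plane is obtained by distinguishing one or more points on the circle and joining some of them by chords such that (1) no two chords meet in the interior of the circle, (2) the interior is divided into triangles, (3) each arc of the circle between two neighbouring distinguished points is one side of a triangle; circles with one, two or three distinguished points count as triangulated with no chords. A triangulation of a cycle $g_0,\dots,g_n$ in $\Gamma$ is a triangulation of a circle with distinguished points $p_1,\dots,p_n$, labelled $g_1,\dots,g_n$ in counterclockwise order. The length of a chord with endpoints $p_i,p_j$ is $d(g_i,g_j)$. A $k$-triangulation is one in which all chords have length at most $k$.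 $\Delta(n)=\Delta_S(n)$ is the least $k$ such that every cycle in $\Gamma$ of length at most $n$ has a $k$-triangulation (so $\Delta(n)=0$ for $1\le n\le3$). $\lceil x\rceil$ is the least integer not less than $x$. *)

theory Defs
  imports "HOL-Algebra.Group" "HOL-Algebra.Generated_Groups" Complex_Main
begin

definition word_val :: "('a, 'b) monoid_scheme \<Rightarrow> 'a list \<Rightarrow> 'a" where
  "word_val G w = foldr (\<lambda>x acc. x \<otimes>\<^bsub>G\<^esub> acc) w \<one>\<^bsub>G\<^esub>"

definition word_dist :: "('a, 'b) monoid_scheme \<Rightarrow> 'a set \<Rightarrow> 'a \<Rightarrow> 'a \<Rightarrow> nat" where
  "word_dist G S g g' = (LEAST n. \<exists>w. w \<in> lists S \<and> length w = n \<and>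
      word_val G w = inv\<^bsub>G\<^esub> g \<otimes>\<^bsub>G\<^esub> g')"

definition is_cycle :: "('a, 'b) monoid_scheme \<Rightarrow> 'a set \<Rightarrow> (nat \<Rightarrow> 'a) \<Rightarrow> nat \<Rightarrow> bool" where
  "is_cycle G S g n \<longleftrightarrow> n \<ge> 1 \<and> (\<forall>i\<le>n. g i \<in> carrier G) \<and>
      (\<forall>i\<in>{1..n}. \<exists>s\<in>S. g i = g (i - 1) \<otimes>\<^bsub>G\<^esub> s) \<and> g n = g 0"

text \<open>tri vs T: T is the set of chords of a diagonal triangulation of the circle whose
  distinguished points, in cyclic order, are vs. A circle with at most three points has no chords;
  otherwise the arc between the last and the first point is a side of a triangle with third vertex
  the k-th point (0 < k < m-1); the chords are the other two sides of that triangle (unless they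
  are arcs) together with triangulations of the two remaining pieces.\<close>
inductive tri :: "nat list \<Rightarrow> (nat \<times> nat) set \<Rightarrow> bool" where
  small: "length vs \<le> 3 \<Longrightarrow> tri vs {}"
| split: "\<lbrakk> 4 \<le> length vs; 0 < k; k < length vs - 1;
            tri (take (Suc k) vs) A; tri (drop k vs) B \<rbrakk> \<Longrightarrow>
          tri vs (A \<union> B \<union> (if 2 \<le> k then {(vs ! 0, vs ! k)} else {})
                        \<union> (if k + 2 < length vs then {(vs ! k, vs ! (length vs - 1))} else {}))"

text \<open>A k-triangulation of the cycle g_0,...,g_n: a triangulation of the circle with points
  p_1..p_n (labelled g_1..g_n) all of whose chords have length at most k.\<close>
definition has_k_triangulation ::
    "('a, 'b) monoid_scheme \<Rightarrow> 'a set \<Rightarrow> nat \<Rightarrow> (nat \<Rightarrow> 'a) \<Rightarrow> nat \<Rightarrow> bool" where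
  "has_k_triangulation G S k g n \<longleftrightarrow>
     (\<exists>T. tri [1..<Suc n] T \<and> (\<forall>(i, j)\<in>T. word_dist G S (g i) (g j) \<le> k))"

definition Delta :: "('a, 'b) monoid_scheme \<Rightarrow> 'a set \<Rightarrow> nat \<Rightarrow> nat" where
  "Delta G S n = (LEAST k. \<forall>m g. 1 \<le> m \<and> m \<le> n \<and> is_cycle G S g m \<longrightarrow>
                                    has_k_triangulation G S k g m)"

text \<open>Letters of the free group on S: (s, True) is s, (s, False) is its formal inverse.\<close>
type_synonym 'a fword = "('a \<times> bool) list"

definition fword_inv :: "'a fword \<Rightarrow> 'a fword" where
  "fword_inv w = rev (map (\<lambda>(a, b). (a, \<not> b)) w)"

definition fword_val :: "('a, 'b) monoid_scheme \<Rightarrow> 'a fword \<Rightarrow> 'a" where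
  "fword_val G w = foldr (\<lambda>(a, b) acc. (if b then a else inv\<^bsub>G\<^esub> a) \<otimes>\<^bsub>G\<^esub> acc) w \<one>\<^bsub>G\<^esub>"

definition free_step :: "('a fword \<times> 'a fword) set" where
  "free_step = {(xs @ [(a, b), (a, \<not> b)] @ ys, xs @ ys) | xs ys a b. True}"

definition free_equiv :: "'a fword \<Rightarrow> 'a fword \<Rightarrow> bool" where
  "free_equiv u v \<longleftrightarrow> (u, v) \<in> (free_step \<union> free_step\<inverse>)\<^sup>*"

text \<open>Product of conjugates u r^{\<plusminus>1} u^{-1}; each entry is (conjugator u, relator r, sign).\<close>
definition conj_prod :: "('a fword \<times> 'a fword \<times> bool) list \<Rightarrow> 'a fword" where
  "conj_prod cs = concat (map (\<lambda>(u, r, e). u @ (if e then r else fword_inv r) @ fword_inv u) cs)"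

definition conj_list_over :: "'a set \<Rightarrow> 'a fword set \<Rightarrow> ('a fword \<times> 'a fword \<times> bool) list \<Rightarrow> bool" where
  "conj_list_over S R cs \<longleftrightarrow> (\<forall>(u, r, e)\<in>set cs. u \<in> lists (S \<times> UNIV) \<and> r \<in> R)"

text \<open>\<langle>S | R\<rangle> is a presentation of G (S a generating set of G): the relators are words in the
  free group on S that are trivial in G, and every word trivial in G lies in the normal closure
  of R, i.e. is freely equivalent to a product of conjugates of relators and their inverses.\<close>
definition is_presentation :: "('a, 'b) monoid_scheme \<Rightarrow> 'a set \<Rightarrow> 'a fword set \<Rightarrow> bool" where
  "is_presentation G S R \<longleftrightarrow>
     R \<subseteq> lists (S \<times> UNIV) \<and> (\<forall>r\<in>R. fword_val G r = \<one>\<^bsub>G\<^esub>) \<and>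
     (\<forall>w\<in>lists (S \<times> UNIV). fword_val G w = \<one>\<^bsub>G\<^esub> \<longrightarrow>
        (\<exists>cs. conj_list_over S R cs \<and> free_equiv w (conj_prod cs)))"

end

theory Submission
  imports Defs
begin

definition lv :: "('a, 'b) monoid_scheme \<Rightarrow> 'a \<times> bool \<Rightarrow> 'a" where
  "lv G x = (if snd x then fst x else inv\<^bsub>G\<^esub> (fst x))"

definition pw :: "'a list \<Rightarrow> 'a fword" where
  "pw u = map (\<lambda>s. (s, True)) u"

lemma word_val_Nil[simp]: "word_val G [] = \<one>\<^bsub>G\<^esub>" by (simp add: word_val_def)
lemma word_val_Cons[simp]: "word_val G (x#xs) = x \<otimes>\<^bsub>G\<^esub> word_val G xs" by (simp add: word_val_def)
lemma fword_val_Nil[simp]: "fword_val G [] = \<one>\<^bsub>G\<^esub>" by (simp add: fword_val_def)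
lemma fword_val_Cons[simp]: "fword_val G (x#xs) = lv G x \<otimes>\<^bsub>G\<^esub> fword_val G xs"
  by (cases x) (simp add: fword_val_def lv_def)
lemma fword_inv_Nil[simp]: "fword_inv [] = []" by (simp add: fword_inv_def)
lemma fword_inv_Cons[simp]: "fword_inv (x#xs) = fword_inv xs @ [(fst x, \<not> snd x)]"
  by (cases x) (simp add: fword_inv_def)
lemma fword_inv_append[simp]: "fword_inv (xs @ ys) = fword_inv ys @ fword_inv xs"
  by (simp add: fword_inv_def)
lemma fword_inv_inv[simp]: "fword_inv (fword_inv xs) = xs"
  by (induction xs) auto
lemma length_fword_inv[simp]: "length (fword_inv xs) = length xs"
  by (simp add: fword_inv_def)
lemma fword_inv_lists: "xs \<in> lists (S \<times> UNIV) \<Longrightarrow> fword_inv xs \<in> lists (S \<times> UNIV)"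
  by (induction xs) auto
lemma pw_lists: "u \<in> lists S \<Longrightarrow> pw u \<in> lists (S \<times> UNIV)"
  by (auto simp: pw_def)
lemma length_pw[simp]: "length (pw u) = length u" by (simp add: pw_def)


lemma tri_exists: "\<exists>T. tri vs T"
proof (induction "length vs" arbitrary: vs rule: less_induct)
  case less
  show ?case
  proof (cases "length vs \<le> 3")
    case True then show ?thesis using tri.small by blast
  next
    case False
    have "length (drop 1 vs) < length vs" using False by simp
    then obtain B where B: "tri (drop 1 vs) B" using less by blast
    have A: "tri (take (Suc 1) vs) {}" by (rule tri.small) simp
    have "tri vs ({} \<union> B \<union> (if 2 \<le> (1::nat) then {(vs ! 0, vs ! 1)} else {})
                        \<union> (if 1 + 2 < length vs then {(vs ! 1, vs ! (length vs - 1))} else {}))"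
      using False A B by (intro tri.split) auto
    then show ?thesis by blast
  qed
qed

lemma tri_subset: "tri vs T \<Longrightarrow> T \<subseteq> set vs \<times> set vs"
proof (induction rule: tri.induct)
  case (small vs) then show ?case by simp
next
  case (split vs k A B)
  have "set (take (Suc k) vs) \<subseteq> set vs" "set (drop k vs) \<subseteq> set vs"
    by (auto dest: in_set_takeD in_set_dropD)
  moreover have "vs ! 0 \<in> set vs" "vs ! k \<in> set vs" "vs ! (length vs - 1) \<in> set vs"
    using split.hyps by (auto intro!: nth_mem)
  ultimately show ?case using split.IH by auto
qed

definition sd :: "(nat \<times> nat) set \<Rightarrow> nat \<Rightarrow> nat \<Rightarrow> nat \<Rightarrow> nat \<Rightarrow> bool" where
  "sd T lo hi a b \<longleftrightarrow> (a, b) \<in> T \<or> (a = lo \<and> b = hi) \<or> b = Suc a"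

lemma descent:
  assumes "tri vs T"
  shows "vs = [lo..<Suc hi] \<Longrightarrow> 2 \<le> hi - lo \<Longrightarrow> hi - lo \<le> n \<Longrightarrow> 2 * (n - (hi - lo)) \<le> n \<Longrightarrow>
    \<exists>x y z. lo \<le> x \<and> x < y \<and> y < z \<and> z \<le> hi \<and> 2 * (y - x) \<le> n \<and> 2 * (z - y) \<le> n \<and>
       2 * (n - (z - x)) \<le> n \<and> sd T lo hi x y \<and> sd T lo hi y z \<and> sd T lo hi x z"
  using assms
proof (induction arbitrary: lo hi rule: tri.induct)
  case (small vs)
  then have "Suc hi - lo \<le> 3" by (simp del: upt_Suc)
  then have "hi = lo + 2" using small.prems by arith
  then show ?case using small.prems
    by (intro exI[of _ lo] exI[of _ "Suc lo"] exI[of _ "Suc (Suc lo)"]) (auto simp: sd_def)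
next
  case (split vs k A B)
  define L where "L = hi - lo"
  have len: "length vs = Suc L" and lohi: "lo + L = hi" using split.prems unfolding L_def by auto
  have kL: "0 < k" "k < L" using split.hyps len by auto
  have n0: "vs ! 0 = lo" "vs ! k = lo + k" "vs ! (length vs - 1) = hi"
    using split.prems kL lohi len by (simp_all add: nth_upt del: upt_Suc)
  have tk: "take (Suc k) vs = [lo..<Suc (lo + k)]" and dk: "drop k vs = [lo + k..<Suc hi]"
    using split.prems kL lohi by (simp_all add: take_upt drop_upt del: upt_Suc)
  let ?T = "A \<union> B \<union> (if 2 \<le> k then {(vs ! 0, vs ! k)} else {})
                        \<union> (if k + 2 < length vs then {(vs ! k, vs ! (length vs - 1))} else {})"
  have AT: "A \<subseteq> ?T" and BT: "B \<subseteq> ?T" by auto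
  have C1: "2 \<le> k \<Longrightarrow> (lo, lo + k) \<in> ?T" using n0 by auto
  have C2: "k + 2 < Suc L \<Longrightarrow> (lo + k, hi) \<in> ?T" using n0 len by auto
  have nL: "L \<le> n" "2 * (n - L) \<le> n" "2 \<le> L" using split.prems unfolding L_def by auto
  show ?case
  proof (cases "2 * k \<le> n \<and> 2 * (L - k) \<le> n")
    case True
    have "sd ?T lo hi lo (lo + k)"
      using C1 unfolding sd_def by (cases "2 \<le> k") (use kL in auto)
    moreover have "sd ?T lo hi (lo + k) hi"
      using C2 unfolding sd_def by (cases "k + 2 < Suc L") (use kL lohi in auto)
    moreover have "sd ?T lo hi lo hi" unfolding sd_def by simp
    ultimately show ?thesis using True kL lohi nL
      by (intro exI[of _ lo] exI[of _ "lo + k"] exI[of _ hi]) auto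
  next
    case False
    show ?thesis
    proof (cases "2 * k > n")
      case True
      have k2: "2 \<le> k" using True nL by linarith
      obtain x y z where xyz: "lo \<le> x \<and> x < y \<and> y < z \<and> z \<le> lo + k \<and> 2 * (y - x) \<le> n \<and> 2 * (z - y) \<le> n \<and>
       2 * (n - (z - x)) \<le> n \<and> sd A lo (lo + k) x y \<and> sd A lo (lo + k) y z \<and> sd A lo (lo + k) x z"
        using split.IH(1)[OF tk] k2 kL nL True by fastforce
      have conv: "sd A lo (lo + k) a b \<Longrightarrow> sd ?T lo hi a b" for a b
        using C1[OF k2] AT unfolding sd_def by blast
      show ?thesis using xyz conv kL lohi by (intro exI[of _ x] exI[of _ y] exI[of _ z]) auto
    next
      case False2: False
      then have T2: "2 * (L - k) > n" using False by auto
      have k2: "2 \<le> L - k" using T2 nL by linarith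
      obtain x y z where xyz: "lo + k \<le> x \<and> x < y \<and> y < z \<and> z \<le> hi \<and> 2 * (y - x) \<le> n \<and> 2 * (z - y) \<le> n \<and>
       2 * (n - (z - x)) \<le> n \<and> sd B (lo + k) hi x y \<and> sd B (lo + k) hi y z \<and> sd B (lo + k) hi x z"
        using split.IH(2)[OF dk] k2 kL nL T2 lohi by fastforce
      have conv: "sd B (lo + k) hi a b \<Longrightarrow> sd ?T lo hi a b" for a b
      proof -
        have c2: "(lo + k, hi) \<in> ?T" by (rule C2) (use k2 kL in arith)
        show "sd B (lo + k) hi a b \<Longrightarrow> sd ?T lo hi a b" using c2 BT unfolding sd_def by blast
      qed
      show ?thesis using xyz conv kL lohi by (intro exI[of _ x] exI[of _ y] exI[of _ z]) auto
    qed
  qed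
qed

lemma fe_refl: "free_equiv u u" by (simp add: free_equiv_def)

lemma fe_sym: "free_equiv u v \<Longrightarrow> free_equiv v u"
  unfolding free_equiv_def using sym_rtrancl[OF sym_Un_converse[of free_step]]
  by (meson symD)

lemma fe_trans: "free_equiv u v \<Longrightarrow> free_equiv v w \<Longrightarrow> free_equiv u w"
  unfolding free_equiv_def by (rule rtrancl_trans)

lemma free_step_ctx: "(u, v) \<in> free_step \<Longrightarrow> (x @ u @ y, x @ v @ y) \<in> free_step"
proof -
  assume "(u, v) \<in> free_step"
  then obtain xs ys a b where "u = xs @ [(a, b), (a, \<not> b)] @ ys" "v = xs @ ys"
    unfolding free_step_def by blast
  then show ?thesis unfolding free_step_def
    by (intro CollectI exI[of _ "x @ xs"] exI[of _ "ys @ y"] exI[of _ a] exI[of _ b]) simp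
qed

lemma fe_ctx: "free_equiv u v \<Longrightarrow> free_equiv (x @ u @ y) (x @ v @ y)"
  unfolding free_equiv_def
proof (induction rule: rtrancl_induct)
  case base then show ?case by simp
next
  case (step v w)
  then have "(x @ v @ y, x @ w @ y) \<in> free_step \<union> free_step\<inverse>"
    using free_step_ctx by blast
  with step.IH show ?case by (rule rtrancl_into_rtrancl)
qed

lemma fe_app: "free_equiv a a' \<Longrightarrow> free_equiv b b' \<Longrightarrow> free_equiv (a @ b) (a' @ b')"
  using fe_ctx[of a a' "[]" b] fe_ctx[of b b' a' "[]"] fe_trans by fastforce

lemma fe_pair: "free_equiv [(a, b), (a, \<not> b)] []"
proof -
  have "([(a, b), (a, \<not> b)], []) \<in> free_step" unfolding free_step_def
    by (intro CollectI exI[of _ "[]"] exI[of _ "[]"] exI[of _ a] exI[of _ b]) simp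
  then show ?thesis unfolding free_equiv_def by blast
qed

lemma fe_cancel: "free_equiv (u @ fword_inv u) []"
proof (induction u)
  case Nil then show ?case by (simp add: fe_refl)
next
  case (Cons c u)
  have "free_equiv ([c] @ (u @ fword_inv u) @ [(fst c, \<not> snd c)]) ([c] @ [] @ [(fst c, \<not> snd c)])"
    by (rule fe_ctx) (rule Cons.IH)
  moreover have "free_equiv [(fst c, snd c), (fst c, \<not> snd c)] []" by (rule fe_pair)
  ultimately show ?case by (cases c) (auto intro: fe_trans)
qed

lemma fe_cancel': "free_equiv (fword_inv u @ u) []"
  using fe_cancel[of "fword_inv u"] by simp

lemma fe_del: "a = x @ u @ fword_inv u @ y \<Longrightarrow> free_equiv a (x @ y)"
  using fe_ctx[OF fe_cancel[of u], of x y] by simp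

lemma fe_del': "a = x @ fword_inv u @ u @ y \<Longrightarrow> free_equiv a (x @ y)"
  using fe_ctx[OF fe_cancel'[of u], of x y] by simp

definition NC :: "'a set \<Rightarrow> 'a fword set \<Rightarrow> 'a fword \<Rightarrow> nat \<Rightarrow> bool" where
  "NC S R w k \<longleftrightarrow> (\<exists>cs. conj_list_over S R cs \<and> length cs \<le> k \<and> free_equiv w (conj_prod cs))"

lemma conj_prod_Nil[simp]: "conj_prod [] = []" by (simp add: conj_prod_def)
lemma conj_prod_Cons[simp]: "conj_prod ((u, r, e) # cs) = u @ (if e then r else fword_inv r) @ fword_inv u @ conj_prod cs"
  by (simp add: conj_prod_def)
lemma conj_prod_append: "conj_prod (cs @ ds) = conj_prod cs @ conj_prod ds"
  by (simp add: conj_prod_def)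

lemma NC_fe: "free_equiv w w' \<Longrightarrow> NC S R w k \<Longrightarrow> NC S R w' k"
  unfolding NC_def by (meson fe_sym fe_trans)

lemma NC_mono: "NC S R w k \<Longrightarrow> k \<le> k' \<Longrightarrow> NC S R w k'"
  unfolding NC_def by (meson le_trans)

lemma NC_rel: "r \<in> R \<Longrightarrow> NC S R r 1"
  unfolding NC_def conj_list_over_def
  by (intro exI[of _ "[([], r, True)]"]) (simp add: fe_refl)

lemma NC_app: "NC S R a k \<Longrightarrow> NC S R b j \<Longrightarrow> NC S R (a @ b) (k + j)"
  unfolding NC_def
proof (elim exE conjE)
  fix cs ds assume "conj_list_over S R cs" "length cs \<le> k" "free_equiv a (conj_prod cs)"
    "conj_list_over S R ds" "length ds \<le> j" "free_equiv b (conj_prod ds)"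
  then show "\<exists>cs. conj_list_over S R cs \<and> length cs \<le> k + j \<and> free_equiv (a @ b) (conj_prod cs)"
    by (intro exI[of _ "cs @ ds"]) (auto simp: conj_list_over_def conj_prod_append intro: fe_app)
qed

lemma conj_shift: "free_equiv (conj_prod (map (\<lambda>(u, r, e). (X @ u, r, e)) cs)) (X @ conj_prod cs @ fword_inv X)"
proof (induction cs)
  case Nil then show ?case using fe_sym[OF fe_del[of "X @ [] @ fword_inv X @ []" "[]" X "[]"]] by simp
next
  case (Cons c cs)
  obtain u r e where c: "c = (u, r, e)" by (cases c)
  let ?r = "if e then r else fword_inv r"
  have "free_equiv (conj_prod (map (\<lambda>(u, r, e). (X @ u, r, e)) (c # cs)))
      ((X @ u @ ?r @ fword_inv u @ fword_inv X) @ (X @ conj_prod cs @ fword_inv X))"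
    using c fe_app[OF fe_refl Cons.IH, of "X @ u @ ?r @ fword_inv u @ fword_inv X"] by simp
  moreover have "free_equiv ((X @ u @ ?r @ fword_inv u @ fword_inv X) @ (X @ conj_prod cs @ fword_inv X))
      ((X @ u @ ?r @ fword_inv u) @ (conj_prod cs @ fword_inv X))"
    by (rule fe_del'[of _ _ X]) simp
  ultimately show ?case using c by (auto intro: fe_trans)
qed

lemma NC_conj: "X \<in> lists (S \<times> UNIV) \<Longrightarrow> NC S R c k \<Longrightarrow> NC S R (X @ c @ fword_inv X) k"
  unfolding NC_def
proof (elim exE conjE)
  fix cs assume X: "X \<in> lists (S \<times> UNIV)" and cs: "conj_list_over S R cs" "length cs \<le> k" "free_equiv c (conj_prod cs)"
  let ?cs = "map (\<lambda>(u, r, e). (X @ u, r, e)) cs"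
  have "conj_list_over S R ?cs" using cs(1) X unfolding conj_list_over_def by (auto; fastforce)
  moreover have "free_equiv (X @ c @ fword_inv X) (conj_prod ?cs)"
    using fe_ctx[OF cs(3), of X "fword_inv X"] fe_sym[OF conj_shift[of X cs]] by (rule fe_trans)
  ultimately show "\<exists>cs. conj_list_over S R cs \<and> length cs \<le> k \<and> free_equiv (X @ c @ fword_inv X) (conj_prod cs)"
    using cs(2) by (intro exI[of _ ?cs]) simp
qed

lemma fe_del2: "a = x @ u @ fword_inv u @ y \<Longrightarrow> b = x @ y \<Longrightarrow> free_equiv a b"
  using fe_del by blast
lemma fe_del2': "a = x @ fword_inv u @ u @ y \<Longrightarrow> b = x @ y \<Longrightarrow> free_equiv a b"
  using fe_del' by blast

lemma chain: "free_equiv ((w1 @ (w2 @ fword_inv u) @ fword_inv w1) @ ((w1 @ u) @ (w3 @ fword_inv v) @ fword_inv (w1 @ u)) @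
    (w1 @ (u @ v @ t) @ fword_inv w1) @ (fword_inv w4 @ (w4 @ w1 @ fword_inv t) @ fword_inv (fword_inv w4)))
   (w1 @ w2 @ w3 @ w4)"
proof -
  have s: "free_equiv ((w1 @ (w2 @ fword_inv u) @ fword_inv w1) @ ((w1 @ u) @ (w3 @ fword_inv v) @ fword_inv (w1 @ u)) @
    (w1 @ (u @ v @ t) @ fword_inv w1) @ (fword_inv w4 @ (w4 @ w1 @ fword_inv t) @ fword_inv (fword_inv w4))) (w1 @ w2 @ fword_inv u @ fword_inv w1 @ w1 @ u @ w3 @ fword_inv v @ fword_inv u @ fword_inv w1 @ w1 @ u @ v @ t @ fword_inv w1 @ fword_inv w4 @ w4 @ w1 @ fword_inv t @ w4)"
    by (simp add: fe_refl)
  have s0: "free_equiv (w1 @ w2 @ fword_inv u @ fword_inv w1 @ w1 @ u @ w3 @ fword_inv v @ fword_inv u @ fword_inv w1 @ w1 @ u @ v @ t @ fword_inv w1 @ fword_inv w4 @ w4 @ w1 @ fword_inv t @ w4) (w1 @ w2 @ fword_inv u @ u @ w3 @ fword_inv v @ fword_inv u @ fword_inv w1 @ w1 @ u @ v @ t @ fword_inv w1 @ fword_inv w4 @ w4 @ w1 @ fword_inv t @ w4)"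
    by (rule fe_del2'[where x = "w1 @ w2 @ fword_inv u" and u = "w1" and y = "u @ w3 @ fword_inv v @ fword_inv u @ fword_inv w1 @ w1 @ u @ v @ t @ fword_inv w1 @ fword_inv w4 @ w4 @ w1 @ fword_inv t @ w4"]) simp_all
  have s1: "free_equiv (w1 @ w2 @ fword_inv u @ u @ w3 @ fword_inv v @ fword_inv u @ fword_inv w1 @ w1 @ u @ v @ t @ fword_inv w1 @ fword_inv w4 @ w4 @ w1 @ fword_inv t @ w4) (w1 @ w2 @ w3 @ fword_inv v @ fword_inv u @ fword_inv w1 @ w1 @ u @ v @ t @ fword_inv w1 @ fword_inv w4 @ w4 @ w1 @ fword_inv t @ w4)"
    by (rule fe_del2'[where x = "w1 @ w2" and u = "u" and y = "w3 @ fword_inv v @ fword_inv u @ fword_inv w1 @ w1 @ u @ v @ t @ fword_inv w1 @ fword_inv w4 @ w4 @ w1 @ fword_inv t @ w4"]) simp_all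
  have s2: "free_equiv (w1 @ w2 @ w3 @ fword_inv v @ fword_inv u @ fword_inv w1 @ w1 @ u @ v @ t @ fword_inv w1 @ fword_inv w4 @ w4 @ w1 @ fword_inv t @ w4) (w1 @ w2 @ w3 @ fword_inv v @ fword_inv u @ u @ v @ t @ fword_inv w1 @ fword_inv w4 @ w4 @ w1 @ fword_inv t @ w4)"
    by (rule fe_del2'[where x = "w1 @ w2 @ w3 @ fword_inv v @ fword_inv u" and u = "w1" and y = "u @ v @ t @ fword_inv w1 @ fword_inv w4 @ w4 @ w1 @ fword_inv t @ w4"]) simp_all
  have s3: "free_equiv (w1 @ w2 @ w3 @ fword_inv v @ fword_inv u @ u @ v @ t @ fword_inv w1 @ fword_inv w4 @ w4 @ w1 @ fword_inv t @ w4) (w1 @ w2 @ w3 @ fword_inv v @ v @ t @ fword_inv w1 @ fword_inv w4 @ w4 @ w1 @ fword_inv t @ w4)"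
    by (rule fe_del2'[where x = "w1 @ w2 @ w3 @ fword_inv v" and u = "u" and y = "v @ t @ fword_inv w1 @ fword_inv w4 @ w4 @ w1 @ fword_inv t @ w4"]) simp_all
  have s4: "free_equiv (w1 @ w2 @ w3 @ fword_inv v @ v @ t @ fword_inv w1 @ fword_inv w4 @ w4 @ w1 @ fword_inv t @ w4) (w1 @ w2 @ w3 @ t @ fword_inv w1 @ fword_inv w4 @ w4 @ w1 @ fword_inv t @ w4)"
    by (rule fe_del2'[where x = "w1 @ w2 @ w3" and u = "v" and y = "t @ fword_inv w1 @ fword_inv w4 @ w4 @ w1 @ fword_inv t @ w4"]) simp_all
  have s5: "free_equiv (w1 @ w2 @ w3 @ t @ fword_inv w1 @ fword_inv w4 @ w4 @ w1 @ fword_inv t @ w4) (w1 @ w2 @ w3 @ t @ fword_inv w1 @ w1 @ fword_inv t @ w4)"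
    by (rule fe_del2'[where x = "w1 @ w2 @ w3 @ t @ fword_inv w1" and u = "w4" and y = "w1 @ fword_inv t @ w4"]) simp_all
  have s6: "free_equiv (w1 @ w2 @ w3 @ t @ fword_inv w1 @ w1 @ fword_inv t @ w4) (w1 @ w2 @ w3 @ t @ fword_inv t @ w4)"
    by (rule fe_del2'[where x = "w1 @ w2 @ w3 @ t" and u = "w1" and y = "fword_inv t @ w4"]) simp_all
  have s7: "free_equiv (w1 @ w2 @ w3 @ t @ fword_inv t @ w4) (w1 @ w2 @ w3 @ w4)"
    by (rule fe_del2[where x = "w1 @ w2 @ w3" and u = "t" and y = "w4"]) simp_all
  show ?thesis using s s0 s1 s2 s3 s4 s5 s6 s7 by (meson fe_trans)
qed

locale cay =
  fixes G :: "('a,'b) monoid_scheme" (structure) and S :: "'a set"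
  assumes grp: "group G" and SG: "S \<subseteq> carrier G" and invS: "\<forall>s\<in>S. inv s \<in> S"
    and gen: "generate G S = carrier G"

sublocale cay \<subseteq> group G by (rule grp)

context cay
begin

lemma word_val_closed: "set w \<subseteq> carrier G \<Longrightarrow> word_val G w \<in> carrier G"
  by (induction w) auto

lemma word_val_append: "set xs \<subseteq> carrier G \<Longrightarrow> set ys \<subseteq> carrier G \<Longrightarrow>
    word_val G (xs @ ys) = word_val G xs \<otimes> word_val G ys"
  by (induction xs) (auto simp: m_assoc word_val_closed)

lemma lv_closed: "x \<in> S \<times> UNIV \<Longrightarrow> lv G x \<in> carrier G"
  using SG by (auto simp: lv_def)

lemma fword_val_closed: "w \<in> lists (S \<times> UNIV) \<Longrightarrow> fword_val G w \<in> carrier G"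
  by (induction w) (auto simp: lv_closed simp del: lists_UNIV)

lemma fword_val_append: "xs \<in> lists (S \<times> UNIV) \<Longrightarrow> ys \<in> lists (S \<times> UNIV) \<Longrightarrow>
    fword_val G (xs @ ys) = fword_val G xs \<otimes> fword_val G ys"
  by (induction xs) (auto simp: m_assoc fword_val_closed lv_closed simp del: lists_UNIV)

lemma fword_val_inv: "w \<in> lists (S \<times> UNIV) \<Longrightarrow> fword_val G (fword_inv w) = inv (fword_val G w)"
proof (induction w)
  case Nil then show ?case by simp
next
  case (Cons x w)
  have x: "x \<in> S \<times> UNIV" and w: "w \<in> lists (S \<times> UNIV)" using Cons.prems by auto
  have "fword_val G (fword_inv (x # w)) = fword_val G (fword_inv w) \<otimes> fword_val G [(fst x, \<not> snd x)]"
  proof -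
    have "[(fst x, \<not> snd x)] \<in> lists (S \<times> UNIV)" using x by auto
    then show ?thesis using fword_val_append[OF fword_inv_lists[OF w]] by simp
  qed
  also have "fword_val G [(fst x, \<not> snd x)] = inv (lv G x)"
    using x SG by (auto simp: lv_def)
  finally show ?case using Cons.IH w x
    by (simp add: inv_mult_group lv_closed fword_val_closed del: lists_UNIV)
qed

lemma fword_val_pw: "u \<in> lists S \<Longrightarrow> fword_val G (pw u) = word_val G u"
  by (induction u) (auto simp: pw_def lv_def)

lemma word_val_rev_inv: "set u \<subseteq> carrier G \<Longrightarrow> word_val G (rev (map (\<lambda>s. inv s) u)) = inv (word_val G u)"
proof (induction u)
  case Nil then show ?case by simp
next
  case (Cons a u)
  have "word_val G (rev (map (\<lambda>s. inv s) (a # u))) = word_val G (rev (map (\<lambda>s. inv s) u) @ [inv a])" by simp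
  also have "\<dots> = word_val G (rev (map (\<lambda>s. inv s) u)) \<otimes> word_val G [inv a]"
    using Cons.prems by (intro word_val_append) auto
  also have "\<dots> = inv (word_val G u) \<otimes> inv a" using Cons by simp
  also have "\<dots> = inv (a \<otimes> word_val G u)" using Cons.prems by (simp add: inv_mult_group word_val_closed)
  finally show ?case by simp
qed


lemma lists_S_carrier: "u \<in> lists S \<Longrightarrow> set u \<subseteq> carrier G" using SG by auto

lemma words_exist: "x \<in> carrier G \<Longrightarrow> \<exists>w\<in>lists S. word_val G w = x"
proof -
  assume "x \<in> carrier G"
  then have "x \<in> generate G S" using gen by simp
  then show ?thesis
  proof (induction rule: generate.induct)
    case one then show ?case by (intro bexI[of _ "[]"]) auto
  next
    case (incl h) then show ?case using SG by (intro bexI[of _ "[h]"]) auto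
  next
    case (inv h) then show ?case using SG invS by (intro bexI[of _ "[inv h]"]) auto
  next
    case (eng h1 h2)
    then obtain w1 w2 where "w1 \<in> lists S" "w2 \<in> lists S" "word_val G w1 = h1" "word_val G w2 = h2" by blast
    then show ?case by (intro bexI[of _ "w1 @ w2"]) (auto simp: word_val_append lists_S_carrier)
  qed
qed

lemma wd_ex: "g \<in> carrier G \<Longrightarrow> g' \<in> carrier G \<Longrightarrow>
   \<exists>u\<in>lists S. length u = word_dist G S g g' \<and> word_val G u = inv g \<otimes> g'"
proof -
  assume "g \<in> carrier G" "g' \<in> carrier G"
  then obtain w where w: "w \<in> lists S" "word_val G w = inv g \<otimes> g'" using words_exist by blast
  have "\<exists>u. u \<in> lists S \<and> length u = word_dist G S g g' \<and> word_val G u = inv g \<otimes> g'"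
    unfolding word_dist_def by (rule LeastI[of _ "length w"]) (use w in blast)
  then show ?thesis by blast
qed

lemma wd_le: "u \<in> lists S \<Longrightarrow> word_val G u = inv g \<otimes> g' \<Longrightarrow> word_dist G S g g' \<le> length u"
  unfolding word_dist_def by (rule Least_le) blast

lemma wd_refl: "g \<in> carrier G \<Longrightarrow> word_dist G S g g = 0"
  using wd_le[of "[]" g g] by simp

lemma wd_step: "g \<in> carrier G \<Longrightarrow> s \<in> S \<Longrightarrow> word_dist G S g (g \<otimes> s) \<le> 1"
  using wd_le[of "[s]" g "g \<otimes> s"] SG by (auto simp: m_assoc[symmetric])

lemma wd_sym: "g \<in> carrier G \<Longrightarrow> g' \<in> carrier G \<Longrightarrow> word_dist G S g g' \<le> word_dist G S g' g"
proof -
  assume c: "g \<in> carrier G" "g' \<in> carrier G"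
  obtain u where u: "u \<in> lists S" "length u = word_dist G S g' g" "word_val G u = inv g' \<otimes> g"
    using wd_ex[OF c(2,1)] by blast
  have "rev (map (\<lambda>s. inv s) u) \<in> lists S" using u(1) invS by auto
  moreover have "word_val G (rev (map (\<lambda>s. inv s) u)) = inv g \<otimes> g'"
    using u c by (simp add: word_val_rev_inv lists_S_carrier inv_mult_group)
  ultimately have "word_dist G S g g' \<le> length (rev (map (\<lambda>s. inv s) u))" by (rule wd_le)
  then show ?thesis using u by simp
qed

lemma wd_sym_eq: "g \<in> carrier G \<Longrightarrow> g' \<in> carrier G \<Longrightarrow> word_dist G S g g' = word_dist G S g' g"
  using wd_sym by (meson le_antisym)

lemma wd_tri: "g \<in> carrier G \<Longrightarrow> g' \<in> carrier G \<Longrightarrow> g'' \<in> carrier G \<Longrightarrow>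
   word_dist G S g g'' \<le> word_dist G S g g' + word_dist G S g' g''"
proof -
  assume c: "g \<in> carrier G" "g' \<in> carrier G" "g'' \<in> carrier G"
  obtain u where u: "u \<in> lists S" "length u = word_dist G S g g'" "word_val G u = inv g \<otimes> g'"
    using wd_ex[OF c(1,2)] by blast
  obtain v where v: "v \<in> lists S" "length v = word_dist G S g' g''" "word_val G v = inv g' \<otimes> g''"
    using wd_ex[OF c(2,3)] by blast
  have "word_val G (u @ v) = (inv g \<otimes> g') \<otimes> (inv g' \<otimes> g'')"
    using u v by (simp add: word_val_append lists_S_carrier)
  also have "\<dots> = inv g \<otimes> g''" using c by (simp add: m_assoc[symmetric]) (simp add: m_assoc)
  finally have "word_dist G S g g'' \<le> length (u @ v)" using u v by (intro wd_le) auto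
  then show ?thesis using u v by simp
qed

lemma cyc_carrier: "is_cycle G S g m \<Longrightarrow> i \<le> m \<Longrightarrow> g i \<in> carrier G"
  by (simp add: is_cycle_def)

lemma cyc_step: "is_cycle G S g m \<Longrightarrow> 1 \<le> i \<Longrightarrow> i \<le> m \<Longrightarrow> word_dist G S (g (i - 1)) (g i) \<le> 1"
proof -
  assume c: "is_cycle G S g m" "1 \<le> i" "i \<le> m"
  then have "\<exists>s\<in>S. g i = g (i - 1) \<otimes> s" unfolding is_cycle_def by auto
  then obtain s where "s \<in> S" "g i = g (i - 1) \<otimes> s" by blast
  moreover have "g (i - 1) \<in> carrier G" using c by (intro cyc_carrier) auto
  ultimately show ?thesis using wd_step by simp
qed

lemma cyc_span: "is_cycle G S g m \<Longrightarrow> i \<le> j \<Longrightarrow> j \<le> m \<Longrightarrow> word_dist G S (g i) (g j) \<le> j - i"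
proof (induction j)
  case 0 then show ?case using wd_refl cyc_carrier by simp
next
  case (Suc j)
  show ?case
  proof (cases "i = Suc j")
    case True then show ?thesis using wd_refl cyc_carrier Suc.prems by simp
  next
    case False
    then have ij: "i \<le> j" using Suc.prems by simp
    have "word_dist G S (g i) (g (Suc j)) \<le> word_dist G S (g i) (g j) + word_dist G S (g j) (g (Suc j))"
      using Suc.prems by (intro wd_tri cyc_carrier[of g m]) auto
    also have "\<dots> \<le> (j - i) + 1" using Suc.IH[OF Suc.prems(1) ij] Suc.prems cyc_step[of g m "Suc j"]
      by (intro add_mono) auto
    finally show ?thesis using ij by simp
  qed
qed

lemma cyc_span_any: "is_cycle G S g m \<Longrightarrow> lo \<le> i \<Longrightarrow> i \<le> hi \<Longrightarrow> lo \<le> j \<Longrightarrow> j \<le> hi \<Longrightarrow> hi \<le> m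
   \<Longrightarrow> word_dist G S (g i) (g j) \<le> hi - lo"
proof -
  assume a: "is_cycle G S g m" "lo \<le> i" "i \<le> hi" "lo \<le> j" "j \<le> hi" "hi \<le> m"
  show ?thesis
  proof (cases "i \<le> j")
    case True then show ?thesis using cyc_span[OF a(1) True] a by simp
  next
    case False
    then have "word_dist G S (g j) (g i) \<le> i - j" using cyc_span[OF a(1), of j i] a by simp
    then show ?thesis using wd_sym_eq[of "g i" "g j"] a cyc_carrier by simp
  qed
qed

lemma cyc_wrap: "is_cycle G S g m \<Longrightarrow> 1 \<le> b \<Longrightarrow> b \<le> m \<Longrightarrow> word_dist G S (g 1) (g b) \<le> m - b + 1"
proof -
  assume a: "is_cycle G S g m" "1 \<le> b" "b \<le> m"
  have gm: "g m = g 0" using a by (simp add: is_cycle_def)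
  have "word_dist G S (g 1) (g b) = word_dist G S (g b) (g 1)"
    using a by (intro wd_sym_eq cyc_carrier[of g m]) auto
  also have "\<dots> \<le> word_dist G S (g b) (g m) + word_dist G S (g m) (g 1)"
    using a by (intro wd_tri cyc_carrier[of g m]) auto
  also have "\<dots> \<le> (m - b) + 1"
    using cyc_span[OF a(1), of b m] a cyc_step[OF a(1), of 1] gm by (intro add_mono) auto
  finally show ?thesis .
qed


lemma piece_tri: "is_cycle G S g m \<Longrightarrow> hi \<le> m \<Longrightarrow>
   \<exists>T. tri [lo..<Suc hi] T \<and> (\<forall>(i,j)\<in>T. word_dist G S (g i) (g j) \<le> hi - lo)"
proof -
  assume a: "is_cycle G S g m" "hi \<le> m"
  obtain T where T: "tri [lo..<Suc hi] T" using tri_exists by blast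
  have "\<forall>(i,j)\<in>T. word_dist G S (g i) (g j) \<le> hi - lo"
  proof (clarify)
    fix i j assume "(i,j) \<in> T"
    then have "lo \<le> i" "i \<le> hi" "lo \<le> j" "j \<le> hi" using tri_subset[OF T] by auto
    then show "word_dist G S (g i) (g j) \<le> hi - lo"
      using cyc_span_any[OF a(1)] a(2) by simp
  qed
  then show ?thesis using T by blast
qed

lemma part1: "is_cycle G S g m \<Longrightarrow> has_k_triangulation G S ((m+2) div 3) g m"
proof -
  assume cyc: "is_cycle G S g m"
  define q where "q = (m+2) div 3"
  define ok where "ok T \<longleftrightarrow> (\<forall>(i,j)\<in>T. word_dist G S (g i) (g j) \<le> q)" for T :: "(nat \<times> nat) set"
  have okU: "ok (X \<union> Y) \<longleftrightarrow> ok X \<and> ok Y" for X Y unfolding ok_def by blast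
  have okI: "ok (if c then {(i,j)} else {}) \<longleftrightarrow> (c \<longrightarrow> word_dist G S (g i) (g j) \<le> q)" for c i j
    unfolding ok_def by auto
  have ok0: "ok {}" unfolding ok_def by simp
  have okmono: "(\<forall>(i,j)\<in>T. word_dist G S (g i) (g j) \<le> r) \<Longrightarrow> r \<le> q \<Longrightarrow> ok T" for T r
    unfolding ok_def by fastforce
  have "\<exists>T. tri [1..<Suc m] T \<and> ok T"
  proof (cases "m \<le> 3")
    case True then show ?thesis using tri.small[of "[1..<Suc m]"] ok0 by auto
  next
    case False
    have q2: "2 \<le> q" and q3: "m \<le> 3 * q" and q3': "3 * q \<le> m + 2" using False unfolding q_def by auto
    define b where "b = Suc (m - q)"
    have b: "b \<le> m" "1 \<le> b" "m - b + 1 = q" using q2 q3 q3' False unfolding b_def by arith+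
    have "\<exists>A. tri [1..<Suc b] A \<and> ok A"
    proof (cases "b \<le> 3")
      case True then show ?thesis using tri.small[of "[1..<Suc b]"] ok0 by auto
    next
      case False
      have mq: "2 * q < m" using False q3' unfolding b_def by linarith
      obtain A1 where A1: "tri [1..<Suc (Suc q)] A1" "\<forall>(i,j)\<in>A1. word_dist G S (g i) (g j) \<le> Suc q - 1"
        using piece_tri[OF cyc, of "Suc q" 1] b mq unfolding b_def by auto
      obtain A2 where A2: "tri [Suc q..<Suc b] A2" "\<forall>(i,j)\<in>A2. word_dist G S (g i) (g j) \<le> b - Suc q"
        using piece_tri[OF cyc, of b "Suc q"] b by auto
      let ?vs = "[1..<Suc b]"
      have t: "tri ?vs (A1 \<union> A2 \<union> (if 2 \<le> q then {(?vs ! 0, ?vs ! q)} else {})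
                        \<union> (if q + 2 < length ?vs then {(?vs ! q, ?vs ! (length ?vs - 1))} else {}))"
        apply (rule tri.split)
        using False mq A1 A2 q2 unfolding b_def by (simp_all add: take_upt drop_upt del: upt_Suc)
      have nth1: "?vs ! 0 = 1" "?vs ! q = Suc q" "?vs ! (length ?vs - 1) = b" "length ?vs = b"
        using mq b False by (simp_all add: nth_upt del: upt_Suc)
      have "ok A1" using A1 by (intro okmono[of _ "Suc q - 1"]) auto
      moreover have "ok A2" using A2 q3 by (intro okmono[of _ "b - Suc q"]) (auto simp: b_def)
      moreover have "word_dist G S (g 1) (g (Suc q)) \<le> q"
        using cyc_span[OF cyc, of 1 "Suc q"] mq by simp
      moreover have "word_dist G S (g (Suc q)) (g b) \<le> q"
      proof -
        have "word_dist G S (g (Suc q)) (g b) \<le> b - Suc q"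
          using cyc_span[OF cyc, of "Suc q" b] mq q3 b unfolding b_def by simp
        also have "b - Suc q \<le> q" using q3 unfolding b_def by simp
        finally show ?thesis .
      qed
      ultimately have "ok (A1 \<union> A2 \<union> (if 2 \<le> q then {(?vs ! 0, ?vs ! q)} else {})
                        \<union> (if q + 2 < length ?vs then {(?vs ! q, ?vs ! (length ?vs - 1))} else {}))"
        unfolding okU okI nth1(1-3) by (simp add: nth1(4))
      then show ?thesis using t by blast
    qed
    then obtain A where A: "tri [1..<Suc b] A" "ok A" by blast
    obtain B where B: "tri [b..<Suc m] B" "\<forall>(i,j)\<in>B. word_dist G S (g i) (g j) \<le> m - b"
      using piece_tri[OF cyc, of m b] by auto
    let ?vs = "[1..<Suc m]"
    let ?k = "m - q"
    have t: "tri ?vs (A \<union> B \<union> (if 2 \<le> ?k then {(?vs ! 0, ?vs ! ?k)} else {})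
                        \<union> (if ?k + 2 < length ?vs then {(?vs ! ?k, ?vs ! (length ?vs - 1))} else {}))"
      apply (rule tri.split)
      using False A B q2 q3 q3' unfolding b_def by (simp_all add: take_upt drop_upt del: upt_Suc)
    have nth2: "?vs ! 0 = 1" "?vs ! ?k = b" "?vs ! (length ?vs - 1) = m" "length ?vs = m"
      using q2 q3 False unfolding b_def by (simp_all add: nth_upt del: upt_Suc)
    have "ok B" using B b by (intro okmono[of _ "m - b"]) auto
    moreover have "word_dist G S (g 1) (g b) \<le> q"
      using cyc_wrap[OF cyc b(2,1)] b by simp
    moreover have "word_dist G S (g b) (g m) \<le> q"
      using cyc_span[OF cyc, of b m] b by simp
    ultimately have "ok (A \<union> B \<union> (if 2 \<le> ?k then {(?vs ! 0, ?vs ! ?k)} else {})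
                        \<union> (if ?k + 2 < length ?vs then {(?vs ! ?k, ?vs ! (length ?vs - 1))} else {}))"
      unfolding okU okI nth2(1-3) using A(2) by (simp add: nth2(4))
    then show ?thesis using t by blast
  qed
  then show ?thesis unfolding has_k_triangulation_def ok_def q_def by blast
qed


lemma lv_S: "x \<in> S \<times> UNIV \<Longrightarrow> lv G x \<in> S"
  using invS by (auto simp: lv_def)

lemma take_lists: "w \<in> lists A \<Longrightarrow> take i w \<in> lists A"
  by (auto dest: in_set_takeD)
lemma drop_lists: "w \<in> lists A \<Longrightarrow> drop i w \<in> lists A"
  by (auto dest: in_set_dropD)

lemma cancel1: "b \<in> carrier G \<Longrightarrow> x \<in> carrier G \<Longrightarrow> b \<otimes> (inv b \<otimes> x) = x"
  by (simp only: m_assoc[symmetric] r_inv l_one inv_closed)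
lemma cancel2: "b \<in> carrier G \<Longrightarrow> x \<in> carrier G \<Longrightarrow> inv b \<otimes> (b \<otimes> x) = x"
  by (simp only: m_assoc[symmetric] l_inv l_one inv_closed)
lemma grp_a: "a \<in> carrier G \<Longrightarrow> b \<in> carrier G \<Longrightarrow> (inv a \<otimes> b) \<otimes> inv (inv a \<otimes> b) = \<one>"
  by (simp only: r_inv m_closed inv_closed)
lemma grp_b: "a \<in> carrier G \<Longrightarrow> b \<in> carrier G \<Longrightarrow> c \<in> carrier G \<Longrightarrow>
   (inv a \<otimes> b) \<otimes> ((inv b \<otimes> c) \<otimes> (inv c \<otimes> a)) = \<one>"
  by (simp add: m_assoc cancel1)
lemma grp_c: "a \<in> carrier G \<Longrightarrow> c \<in> carrier G \<Longrightarrow> inv c \<otimes> (a \<otimes> inv (inv c \<otimes> a)) = \<one>"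
  by (simp add: inv_mult_group cancel1)
lemma grp_d: "a \<in> carrier G \<Longrightarrow> x \<in> carrier G \<Longrightarrow> inv a \<otimes> (a \<otimes> x) = x"
  by (rule cancel2)
lemma grp_e: "a \<in> carrier G \<Longrightarrow> x \<in> carrier G \<Longrightarrow> a \<otimes> x = \<one> \<Longrightarrow> x = inv a"
proof -
  assume a: "a \<in> carrier G" "x \<in> carrier G" "a \<otimes> x = \<one>"
  have "x = inv a \<otimes> (a \<otimes> x)" using cancel2[OF a(1,2)] by simp
  also have "\<dots> = inv a" using a by simp
  finally show ?thesis .
qed

lemma main:
  assumes M4: "4 \<le> M"
    and hyp: "\<And>n g. M < n \<Longrightarrow> is_cycle G S g n \<Longrightarrow> \<exists>D. 3 * D + 1 \<le> n \<and> has_k_triangulation G S D g n"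
    and Rdef: "R = {r \<in> lists (S \<times> UNIV). length r \<le> M \<and> fword_val G r = \<one>}"
  shows "w \<in> lists (S \<times> UNIV) \<Longrightarrow> fword_val G w = \<one> \<Longrightarrow> NC S R w (4 ^ length w)"
proof (induction "length w" arbitrary: w rule: less_induct)
  case less
  define n where "n = length w"
  have wl: "w \<in> lists (S \<times> UNIV)" and wv: "fword_val G w = \<one>" using less.prems by auto
  have IH: "c \<in> lists (S \<times> UNIV) \<Longrightarrow> fword_val G c = \<one> \<Longrightarrow> length c < n \<Longrightarrow> NC S R c (4 ^ (n - 1))" for c
  proof -
    assume c: "c \<in> lists (S \<times> UNIV)" "fword_val G c = \<one>" "length c < n"
    have "NC S R c (4 ^ length c)" using less.hyps c n_def by blast
    moreover have "(4::nat) ^ length c \<le> 4 ^ (n - 1)" using c(3) by (intro power_increasing) auto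
    ultimately show ?thesis by (rule NC_mono)
  qed
  show ?case
  proof (cases "n \<le> M")
    case True
    then have "w \<in> R" using wl wv Rdef n_def by auto
    then have "NC S R w 1" by (rule NC_rel)
    then show ?thesis by (rule NC_mono) simp
  next
    case False
    define g where "g i = fword_val G (take i w)" for i
    have gc: "g i \<in> carrier G" for i unfolding g_def by (intro fword_val_closed take_lists wl)
    have cyc: "is_cycle G S g n"
      unfolding is_cycle_def
    proof (intro conjI allI impI ballI)
      show "1 \<le> n" using False M4 by simp
      show "g i \<in> carrier G" for i by (rule gc)
      show "g n = g 0" unfolding g_def n_def using wv by simp
      fix i assume i: "i \<in> {1..n}"
      then have i1: "Suc (i - 1) = i" "i - 1 < length w" using n_def by auto
      have tk: "take i w = take (i - 1) w @ [w ! (i - 1)]"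
        using take_Suc_conv_app_nth[OF i1(2)] unfolding i1(1) .
      have wi: "w ! (i - 1) \<in> S \<times> UNIV" using i wl n_def by (auto dest!: in_listsD intro!: nth_mem)
      have "g i = g (i - 1) \<otimes> fword_val G [w ! (i - 1)]"
        unfolding g_def tk using wi by (intro fword_val_append take_lists wl) auto
      also have "fword_val G [w ! (i - 1)] = lv G (w ! (i - 1))" using lv_closed[OF wi] by simp
      finally have "g i = g (i - 1) \<otimes> lv G (w ! (i - 1))" .
      then show "\<exists>s\<in>S. g i = g (i - 1) \<otimes> s" using lv_S[OF wi] by (rule bexI)
    qed
    obtain D T where D: "3 * D + 1 \<le> n" and T: "tri [1..<Suc n] T" "\<forall>(i,j)\<in>T. word_dist G S (g i) (g j) \<le> D"
      using hyp[OF _ cyc] False unfolding has_k_triangulation_def by auto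
    have "\<exists>x y z. 1 \<le> x \<and> x < y \<and> y < z \<and> z \<le> n \<and> 2 * (y - x) \<le> n \<and> 2 * (z - y) \<le> n \<and>
       2 * (n - (z - x)) \<le> n \<and> sd T 1 n x y \<and> sd T 1 n y z \<and> sd T 1 n x z"
      by (rule descent[OF T(1) refl]) (use False M4 in auto)
    then obtain x y z where xyz: "1 \<le> x" "x < y" "y < z" "z \<le> n" "2 * (y - x) \<le> n" "2 * (z - y) \<le> n"
      "2 * (n - (z - x)) \<le> n" "sd T 1 n x y" "sd T 1 n y z" "sd T 1 n x z" by blast
    define e where "e = max D 1"
    have e3: "3 * e + 1 \<le> n" using D False M4 by (auto simp: e_def)
    have side: "word_dist G S (g a) (g b) \<le> e" if H: "sd T 1 n a b" "a < b" "1 \<le> a" "b \<le> n" for a b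
    proof -
      consider "(a, b) \<in> T" | "a = 1 \<and> b = n" | "b = Suc a" using H(1) unfolding sd_def by blast
      then show ?thesis
      proof cases
        case 1 then show ?thesis using T(2) unfolding e_def by fastforce
      next
        case 2 then show ?thesis using cyc_wrap[OF cyc, of n] H unfolding e_def by simp
      next
        case 3 then show ?thesis using cyc_span[OF cyc, of a b] H unfolding e_def by simp
      qed
    qed
    obtain u0 where u0: "u0 \<in> lists S" "length u0 \<le> e" "word_val G u0 = inv (g x) \<otimes> g y"
      using wd_ex[OF gc gc, of x y] side[of x y] xyz by fastforce
    obtain v0 where v0: "v0 \<in> lists S" "length v0 \<le> e" "word_val G v0 = inv (g y) \<otimes> g z"
      using wd_ex[OF gc gc, of y z] side[of y z] xyz by fastforce
    obtain t0 where t0: "t0 \<in> lists S" "length t0 \<le> e" "word_val G t0 = inv (g z) \<otimes> g x"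
      using wd_ex[OF gc gc, of z x] side[of x z] xyz wd_sym_eq[OF gc gc, of z x] by fastforce
    define u v t where "u = pw u0" and "v = pw v0" and "t = pw t0"
    have ul: "u \<in> lists (S \<times> UNIV)" "v \<in> lists (S \<times> UNIV)" "t \<in> lists (S \<times> UNIV)"
      unfolding u_def v_def t_def by (rule pw_lists[OF u0(1)], rule pw_lists[OF v0(1)], rule pw_lists[OF t0(1)])
    have uv: "fword_val G u = inv (g x) \<otimes> g y" "fword_val G v = inv (g y) \<otimes> g z"
       "fword_val G t = inv (g z) \<otimes> g x"
      using u0 v0 t0 unfolding u_def v_def t_def by (simp_all add: fword_val_pw)
    have ulen: "length u \<le> e" "length v \<le> e" "length t \<le> e"
      using u0 v0 t0 unfolding u_def v_def t_def by simp_all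
    define w1 w2 w3 w4 where "w1 = take x w" and "w2 = take (y - x) (drop x w)"
      and "w3 = take (z - y) (drop y w)" and "w4 = drop z w"
    have wl': "w1 \<in> lists (S \<times> UNIV)" "w2 \<in> lists (S \<times> UNIV)" "w3 \<in> lists (S \<times> UNIV)" "w4 \<in> lists (S \<times> UNIV)"
      unfolding w1_def w2_def w3_def w4_def using wl by (auto intro!: take_lists drop_lists)
    have ty: "take y w = w1 @ w2" unfolding w1_def w2_def using xyz take_add[of x "y - x" w] by simp
    have tz: "take z w = take y w @ w3" unfolding w3_def using xyz take_add[of y "z - y" w] by simp
    have tw: "w = take z w @ w4" unfolding w4_def by simp
    have wsplit: "w = w1 @ w2 @ w3 @ w4" using tw unfolding tz ty by simp
    have lens: "length w1 = x" "length w2 = y - x" "length w3 = z - y" "length w4 = n - z"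
      unfolding w1_def w2_def w3_def w4_def using xyz n_def by auto
    have gx: "g x = fword_val G w1" unfolding g_def w1_def by simp
    have gy: "g y = g x \<otimes> fword_val G w2" unfolding gx unfolding g_def ty
      using fword_val_append[OF wl'(1,2)] by simp
    have gz: "g z = g y \<otimes> fword_val G w3" unfolding g_def tz
      using fword_val_append[OF take_lists[OF wl, of y] wl'(3)] by simp
    have g1: "g z \<otimes> fword_val G w4 = \<one>"
    proof -
      have "\<one> = fword_val G (take z w @ w4)" using wv unfolding w4_def by simp
      also have "\<dots> = g z \<otimes> fword_val G w4" unfolding g_def
        by (rule fword_val_append[OF take_lists[OF wl, of z] wl'(4)])
      finally show ?thesis by simp
    qed
    have v2: "fword_val G w2 = inv (g x) \<otimes> g y" using gy grp_d[OF gc fword_val_closed[OF wl'(2)]] by simp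
    have v3: "fword_val G w3 = inv (g y) \<otimes> g z" using gz grp_d[OF gc fword_val_closed[OF wl'(3)]] by simp
    have v4: "fword_val G w4 = inv (g z)" using grp_e[OF gc fword_val_closed[OF wl'(4)] g1] .
    define c1 c2 c0 c3 where "c1 = w2 @ fword_inv u" and "c2 = w3 @ fword_inv v" and "c0 = u @ v @ t"
      and "c3 = w4 @ w1 @ fword_inv t"
    have cl: "c1 \<in> lists (S \<times> UNIV)" "c2 \<in> lists (S \<times> UNIV)" "c0 \<in> lists (S \<times> UNIV)" "c3 \<in> lists (S \<times> UNIV)"
      unfolding c1_def c2_def c0_def c3_def using wl' ul by (auto intro!: fword_inv_lists simp del: lists_UNIV)
    have iu: "fword_inv u \<in> lists (S \<times> UNIV)" "fword_inv v \<in> lists (S \<times> UNIV)" "fword_inv t \<in> lists (S \<times> UNIV)"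
      by (rule fword_inv_lists[OF ul(1)], rule fword_inv_lists[OF ul(2)], rule fword_inv_lists[OF ul(3)])
    have fc: "fword_val G u \<in> carrier G" "fword_val G v \<in> carrier G" "fword_val G t \<in> carrier G"
      "fword_val G w1 \<in> carrier G"
      by (rule fword_val_closed[OF ul(1)], rule fword_val_closed[OF ul(2)], rule fword_val_closed[OF ul(3)],
          rule fword_val_closed[OF wl'(1)])
    have "fword_val G c1 = fword_val G w2 \<otimes> inv (fword_val G u)" unfolding c1_def
      using fword_val_append[OF wl'(2) iu(1)] fword_val_inv[OF ul(1)] by simp
    also have "\<dots> = \<one>" unfolding v2 uv by (rule grp_a[OF gc gc])
    finally have cv1: "fword_val G c1 = \<one>" .
    have "fword_val G c2 = fword_val G w3 \<otimes> inv (fword_val G v)" unfolding c2_def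
      using fword_val_append[OF wl'(3) iu(2)] fword_val_inv[OF ul(2)] by simp
    also have "\<dots> = \<one>" unfolding v3 uv by (rule grp_a[OF gc gc])
    finally have cv2: "fword_val G c2 = \<one>" .
    have "fword_val G c0 = fword_val G u \<otimes> (fword_val G v \<otimes> fword_val G t)" unfolding c0_def
      using fword_val_append[OF ul(1) append_in_lists_conv[THEN iffD2, OF conjI, OF ul(2,3)]]
        fword_val_append[OF ul(2,3)] by simp
    also have "\<dots> = \<one>" unfolding uv by (rule grp_b[OF gc gc gc])
    finally have cv0: "fword_val G c0 = \<one>" .
    have "fword_val G c3 = fword_val G w4 \<otimes> (fword_val G w1 \<otimes> inv (fword_val G t))" unfolding c3_def
      using fword_val_append[OF wl'(4) append_in_lists_conv[THEN iffD2, OF conjI, OF wl'(1) iu(3)]]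
        fword_val_append[OF wl'(1) iu(3)] fword_val_inv[OF ul(3)] by simp
    also have "\<dots> = \<one>" unfolding v4 uv gx[symmetric] by (rule grp_c[OF gc gc])
    finally have cv3: "fword_val G c3 = \<one>" .
    note cv = cv1 cv2 cv0 cv3
    have clen: "length c1 < n" "length c2 < n" "length c0 < n" "length c3 < n"
      unfolding c1_def c2_def c0_def c3_def using lens ulen xyz e3 by auto
    have N1: "NC S R c1 (4 ^ (n - 1))" "NC S R c2 (4 ^ (n - 1))" "NC S R c0 (4 ^ (n - 1))" "NC S R c3 (4 ^ (n - 1))"
      using IH cl cv clen by blast+
    have "NC S R ((w1 @ c1 @ fword_inv w1) @ ((w1 @ u) @ c2 @ fword_inv (w1 @ u)) @
       (w1 @ c0 @ fword_inv w1) @ (fword_inv w4 @ c3 @ fword_inv (fword_inv w4)))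
       (4 ^ (n - 1) + (4 ^ (n - 1) + (4 ^ (n - 1) + 4 ^ (n - 1))))"
    proof -
      have w1u: "w1 @ u \<in> lists (S \<times> UNIV)" using wl'(1) ul(1) by simp
      have iw4: "fword_inv w4 \<in> lists (S \<times> UNIV)" using wl'(4) by (rule fword_inv_lists)
      show ?thesis
        by (rule NC_app[OF NC_conj[OF wl'(1) N1(1)] NC_app[OF NC_conj[OF w1u N1(2)]
              NC_app[OF NC_conj[OF wl'(1) N1(3)] NC_conj[OF iw4 N1(4)]]]])
    qed
    then have "NC S R (w1 @ w2 @ w3 @ w4) (4 ^ (n - 1) + (4 ^ (n - 1) + (4 ^ (n - 1) + 4 ^ (n - 1))))"
      unfolding c1_def c2_def c0_def c3_def by (rule NC_fe[OF chain])
    moreover have "(4::nat) ^ (n - 1) + (4 ^ (n - 1) + (4 ^ (n - 1) + 4 ^ (n - 1))) = 4 ^ n"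
      using False M4 by (cases n) auto
    ultimately show ?thesis using wsplit n_def by simp
  qed
qed

end

lemma hkt_mono: "has_k_triangulation G S k g m \<Longrightarrow> k \<le> k' \<Longrightarrow> has_k_triangulation G S k' g m"
  unfolding has_k_triangulation_def by fastforce

lemma ceil_third: "\<lceil>real n / 3\<rceil> = int ((n + 2) div 3)"
proof -
  have a: "n \<le> 3 * ((n + 2) div 3)" "3 * ((n + 2) div 3) \<le> n + 2" by presburger+
  have b: "real n \<le> 3 * real ((n + 2) div 3)" using of_nat_mono[OF a(1)] by simp
  have c: "3 * real ((n + 2) div 3) \<le> real n + 2" using of_nat_mono[OF a(2)] by simp
  show ?thesis
    by (rule ceiling_unique) (use b c in auto)
qed

theorem theoremA:
  fixes G :: "('a, 'b) monoid_scheme" and S :: "'a set"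
  assumes "group G" and "finite S" and "S \<subseteq> carrier G"
    and "\<forall>s\<in>S. inv\<^bsub>G\<^esub> s \<in> S" and "generate G S = carrier G"
  shows "(\<forall>n\<ge>1. int (Delta G S n) \<le> \<lceil>real n / 3\<rceil>) \<and>
         ((\<exists>N. \<forall>n\<ge>N. int (Delta G S n) < \<lceil>real n / 3\<rceil>) \<longrightarrow>
            (\<exists>R (c::real). finite R \<and> is_presentation G S R \<and>
               (\<forall>w\<in>lists S. word_val G w = \<one>\<^bsub>G\<^esub> \<longrightarrow>
                  (\<exists>cs. conj_list_over S R cs \<and> real (length cs) \<le> c ^ length w \<and>
                        free_equiv (map (\<lambda>s. (s, True)) w) (conj_prod cs)))))"
proof -
  interpret cay G S by (rule cay.intro) (use assms in auto)
  define q where "q n = (n + 2) div 3" for n :: nat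
  have P: "\<forall>m g. 1 \<le> m \<and> m \<le> n \<and> is_cycle G S g m \<longrightarrow> has_k_triangulation G S (q n) g m" for n
  proof (intro allI impI)
    fix m g assume h: "1 \<le> m \<and> m \<le> n \<and> is_cycle G S g m"
    then have "has_k_triangulation G S ((m + 2) div 3) g m" using part1 by blast
    moreover have "(m + 2) div 3 \<le> q n" unfolding q_def using h by (intro div_le_mono) simp
    ultimately show "has_k_triangulation G S (q n) g m" by (rule hkt_mono)
  qed
  have Dle: "Delta G S n \<le> q n" for n unfolding Delta_def by (rule Least_le) (rule P)
  have DP: "\<forall>m g. 1 \<le> m \<and> m \<le> n \<and> is_cycle G S g m \<longrightarrow> has_k_triangulation G S (Delta G S n) g m" for n
    unfolding Delta_def by (rule LeastI) (rule P)
  have part_a: "\<forall>n\<ge>1. int (Delta G S n) \<le> \<lceil>real n / 3\<rceil>"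
    using Dle unfolding ceil_third q_def by simp
  have part_b: "\<exists>R (c::real). finite R \<and> is_presentation G S R \<and>
               (\<forall>w\<in>lists S. word_val G w = \<one>\<^bsub>G\<^esub> \<longrightarrow>
                  (\<exists>cs. conj_list_over S R cs \<and> real (length cs) \<le> c ^ length w \<and>
                        free_equiv (map (\<lambda>s. (s, True)) w) (conj_prod cs)))"
    if ex: "\<exists>N. \<forall>n\<ge>N. int (Delta G S n) < \<lceil>real n / 3\<rceil>"
  proof -
    obtain N where N: "\<forall>n\<ge>N. int (Delta G S n) < \<lceil>real n / 3\<rceil>" using ex by blast
    define M where "M = max N 4"
    define R where "R = {r \<in> lists (S \<times> UNIV). length r \<le> M \<and> fword_val G r = \<one>\<^bsub>G\<^esub>}"
    have M4: "4 \<le> M" unfolding M_def by simp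
    have hyp: "\<exists>D. 3 * D + 1 \<le> n \<and> has_k_triangulation G S D g n" if "M < n" "is_cycle G S g n" for n g
    proof (intro exI conjI)
      have "int (Delta G S n) < int (q n)" using N that(1) unfolding M_def ceil_third q_def by simp
      then have "Delta G S n < q n" by simp
      then show "3 * Delta G S n + 1 \<le> n" unfolding q_def by linarith
      show "has_k_triangulation G S (Delta G S n) g n" using DP that M4 by auto
    qed
    have NCall: "NC S R w (4 ^ length w)" if "w \<in> lists (S \<times> UNIV)" "fword_val G w = \<one>\<^bsub>G\<^esub>" for w
      by (rule main[OF M4 hyp R_def that]) auto
    have finR: "finite R"
    proof (rule finite_subset)
      show "R \<subseteq> {xs. set xs \<subseteq> S \<times> (UNIV :: bool set) \<and> length xs \<le> M}" unfolding R_def by auto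
      show "finite {xs. set xs \<subseteq> S \<times> (UNIV :: bool set) \<and> length xs \<le> M}"
        by (rule finite_lists_length_le) (use assms(2) in simp)
    qed
    have pres: "is_presentation G S R"
      unfolding is_presentation_def
    proof (intro conjI ballI impI)
      show "R \<subseteq> lists (S \<times> UNIV)" unfolding R_def by blast
      show "fword_val G r = \<one>\<^bsub>G\<^esub>" if "r \<in> R" for r using that unfolding R_def by blast
      fix w :: "'a fword" assume "w \<in> lists (S \<times> UNIV)" "fword_val G w = \<one>\<^bsub>G\<^esub>"
      then have "NC S R w (4 ^ length w)" by (rule NCall)
      then show "\<exists>cs. conj_list_over S R cs \<and> free_equiv w (conj_prod cs)" unfolding NC_def by blast
    qed
    have bound: "\<exists>cs. conj_list_over S R cs \<and> real (length cs) \<le> 4 ^ length w \<and>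
                        free_equiv (map (\<lambda>s. (s, True)) w) (conj_prod cs)"
      if "w \<in> lists S" "word_val G w = \<one>\<^bsub>G\<^esub>" for w
    proof -
      have "pw w \<in> lists (S \<times> UNIV)" using that(1) by (rule pw_lists)
      moreover have "fword_val G (pw w) = \<one>\<^bsub>G\<^esub>" using fword_val_pw[OF that(1)] that(2) by simp
      ultimately have "NC S R (pw w) (4 ^ length (pw w))" by (rule NCall)
      then obtain cs where cs: "conj_list_over S R cs" "length cs \<le> 4 ^ length w" "free_equiv (pw w) (conj_prod cs)"
        unfolding NC_def by auto
      have "real (length cs) \<le> real (4 ^ length w)" using cs(2) by (rule of_nat_mono)
      then have "real (length cs) \<le> 4 ^ length w" by simp
      then show ?thesis using cs unfolding pw_def by blast
    qed
    show ?thesis using finR pres bound by blast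
  qed
  show ?thesis using part_a part_b by blast
qed

end
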